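(* Let $p$ and $q$ be two different odd primes and let $a\in(\mathbb{Z}/pq\mathbb{Z})^*$ be such that $a\bmod p$ generates $(\mathbb{Z}/p\mathbb{Z})^*$ and $a^{(p-1)/2}\equiv-1\pmod{pq}$. Let $S=S_{pq}(a)$ and $\lambda=|S\cap(S+1)|$. If $\lambda\equiv-2\pmod q$, then with $t=(\lambda+2)/q$ and any permutations $\pi_2,\dots,\pi_t$ of $\{1,\dots,p\}$, the graph $F_{(\pi_2,\dots,\pi_t)}(\Gamma_{pq}(a))$ is a Neumaier graph with parameters $(tpq,\,p+\lambda,\,\lambda;\,1,\,\lambda+2)$.
   Context: $S_{pq}(a)=\{a^j: 0\le j<p-1\}\subseteq\mathbb{Z}/pq\mathbb{Z}$, and $\Gamma_{pq}(a)$ is the Cayley graph on $(\mathbb{Z}/pq\mathbb{Z},+)$ with connection set $S_{pq}(a)$ ($x\sim y$ iff $x-y\in S_{pq}(a)$); $S+1=\{s+1:s\in S\}$. Its vertex set is partitioned into the $p$ cosets $C_1,\dots,C_p$ (in some fixed order) of the additive subgroup generated by $p$. Construction $F$: take $t$ disjoint copies $\Gamma_1,\dots,\Gamma_t$ of $\Gamma_{pq}(a)$, with $C_{i,r}$ the copy of $C_r$ in $\Gamma_i$, and set $\pi_1=\mathrm{id}$; $F_{(\pi_2,\dots,\pi_t)}(\Gamma_{pq}(a))$ has vertex set the union of the copies, and distinct $x\in C_{i,k'}$, $y\in C_{j,l'}$ are adjacent iff ($i=j$ and $x\sim y$ in $\Gamma_i$) or $\pi_i^{-1}(k')=\pi_j^{-1}(l')$.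 A regular graph is $\lambda$-edge-regular if it has at least one edge and any two adjacent vertices have exactly $\lambda$ common neighbours. A Neumaier graph with parameters $(v,k,\lambda;e,s)$ is a non-complete $k$-regular, $\lambda$-edge-regular graph on $v$ vertices containing a clique of size $s$ such that every vertex outside it has exactly $e>0$ neighbours in it. *)

theory Defs
  imports "HOL-Number_Theory.Number_Theory" "HOL-Combinatorics.Permutations"
begin

definition simple_graph :: "'v set \<Rightarrow> ('v \<Rightarrow> 'v \<Rightarrow> bool) \<Rightarrow> bool" where
  "simple_graph V E \<longleftrightarrow> finite V \<and> (\<forall>x\<in>V. \<forall>y\<in>V. E x y \<longleftrightarrow> E y x) \<and> (\<forall>x\<in>V. \<not> E x x)"

definition nbrs :: "'v set \<Rightarrow> ('v \<Rightarrow> 'v \<Rightarrow> bool) \<Rightarrow> 'v \<Rightarrow> 'v set" where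
  "nbrs V E x = {y \<in> V. E x y}"

definition regular_graph :: "'v set \<Rightarrow> ('v \<Rightarrow> 'v \<Rightarrow> bool) \<Rightarrow> nat \<Rightarrow> bool" where
  "regular_graph V E k \<longleftrightarrow> (\<forall>x\<in>V. card (nbrs V E x) = k)"

definition edge_regular :: "'v set \<Rightarrow> ('v \<Rightarrow> 'v \<Rightarrow> bool) \<Rightarrow> nat \<Rightarrow> bool" where
  "edge_regular V E lam \<longleftrightarrow> (\<exists>k. regular_graph V E k)
     \<and> (\<exists>x\<in>V. \<exists>y\<in>V. E x y)
     \<and> (\<forall>x\<in>V. \<forall>y\<in>V. E x y \<longrightarrow> card (nbrs V E x \<inter> nbrs V E y) = lam)"

definition is_clique :: "'v set \<Rightarrow> ('v \<Rightarrow> 'v \<Rightarrow> bool) \<Rightarrow> 'v set \<Rightarrow> bool" where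
  "is_clique V E C \<longleftrightarrow> C \<subseteq> V \<and> (\<forall>x\<in>C. \<forall>y\<in>C. x \<noteq> y \<longrightarrow> E x y)"

definition complete_graph :: "'v set \<Rightarrow> ('v \<Rightarrow> 'v \<Rightarrow> bool) \<Rightarrow> bool" where
  "complete_graph V E \<longleftrightarrow> (\<forall>x\<in>V. \<forall>y\<in>V. x \<noteq> y \<longrightarrow> E x y)"

definition neumaier_graph ::
  "'v set \<Rightarrow> ('v \<Rightarrow> 'v \<Rightarrow> bool) \<Rightarrow> nat \<Rightarrow> nat \<Rightarrow> nat \<Rightarrow> nat \<Rightarrow> nat \<Rightarrow> bool" where
  "neumaier_graph V E v k lam e s \<longleftrightarrow>
     simple_graph V E \<and> card V = v \<and> \<not> complete_graph V E
     \<and> regular_graph V E k \<and> edge_regular V E lam \<and> e > 0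
     \<and> (\<exists>C. is_clique V E C \<and> card C = s
            \<and> (\<forall>x\<in>V - C. card (nbrs V E x \<inter> C) = e))"

section \<open>The Cayley graph Gamma_pq(a) on Z/pqZ, represented by {0..<p*q}\<close>

definition S_pq :: "nat \<Rightarrow> nat \<Rightarrow> nat \<Rightarrow> nat set" where
  "S_pq p q a = {a ^ j mod (p * q) | j. j < p - 1}"

definition shift1 :: "nat \<Rightarrow> nat set \<Rightarrow> nat set" where
  "shift1 n S = {(s + 1) mod n | s. s \<in> S}"

definition Gamma_adj :: "nat \<Rightarrow> nat \<Rightarrow> nat \<Rightarrow> nat \<Rightarrow> nat \<Rightarrow> bool" where
  "Gamma_adj p q a x y \<longleftrightarrow> nat ((int x - int y) mod int (p * q)) \<in> S_pq p q a"

text \<open>Vertices: pairs (i,x) with copy index i in {1..t} and x in Z/pqZ.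
  The cosets of the subgroup generated by p are the sets {x. x mod p = r}, r < p;
  their fixed ordering C_1,...,C_p is given by a bijection c from {0..<p} to {1..p}
  (coset {x. x mod p = r} is C_(c r)).  pi i is the permutation of copy i, pi_1 = id.\<close>

definition F_vertices :: "nat \<Rightarrow> nat \<Rightarrow> nat \<Rightarrow> (nat \<times> nat) set" where
  "F_vertices t p q = {1..t} \<times> {0..<p * q}"

definition F_perm :: "(nat \<Rightarrow> nat \<Rightarrow> nat) \<Rightarrow> nat \<Rightarrow> nat \<Rightarrow> nat" where
  "F_perm \<pi> i = (if i = 1 then id else \<pi> i)"

definition F_adj :: "nat \<Rightarrow> nat \<Rightarrow> nat \<Rightarrow> (nat \<Rightarrow> nat) \<Rightarrow> (nat \<Rightarrow> nat \<Rightarrow> nat)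
     \<Rightarrow> nat \<times> nat \<Rightarrow> nat \<times> nat \<Rightarrow> bool" where
  "F_adj p q a c \<pi> u w \<longleftrightarrow> u \<noteq> w \<and>
     ((fst u = fst w \<and> Gamma_adj p q a (snd u) (snd w))
      \<or> inv_into UNIV (F_perm \<pi> (fst u)) (c (snd u mod p)) = inv_into UNIV (F_perm \<pi> (fst w)) (c (snd w mod p)))"

end

theory Submission
  imports Defs
begin

locale nm =
  fixes p q a :: nat
  assumes pp: "prime p" and qp: "prime q" and po: "odd p" and qo: "odd q" and pq: "p \<noteq> q"
    and cop: "coprime a (p * q)" and prim: "residue_primroot p a"
    and half: "[int a ^ ((p - 1) div 2) = - 1] (mod int (p * q))"
begin

definition inS :: "int \<Rightarrow> bool" where
  "inS z \<longleftrightarrow> (\<exists>j. [z = int a ^ j] (mod int (p * q)))"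

lemma p3: "p \<ge> 3" using prime_ge_2_nat[OF pp] po by (cases "p = 2") auto
lemma q3: "q \<ge> 3" using prime_ge_2_nat[OF qp] qo by (cases "q = 2") auto

lemma pw1: "[int a ^ (p - 1) = 1] (mod int (p * q))"
proof -
  have c: "[(int a ^ ((p - 1) div 2))^2 = (-1)^2] (mod int (p * q))"
    using half cong_pow by blast
  have e: "(p - 1) div 2 * 2 = p - 1" using po by presburger
  have s: "(int a ^ ((p - 1) div 2))^2 = int a ^ (p - 1)" by (metis e power_mult)
  have m: "(-1::int)^2 = 1" by simp
  show ?thesis using c unfolding s m .
qed

lemma red: "[int a ^ i = int a ^ (i mod (p - 1))] (mod int (p * q))"
proof -
  have "int a ^ i = int a ^ ((p - 1) * (i div (p - 1)) + i mod (p - 1))"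
    by (simp only: mult_div_mod_eq)
  also have "\<dots> = (int a ^ (p - 1)) ^ (i div (p - 1)) * int a ^ (i mod (p - 1))"
    by (simp only: power_add power_mult)
  finally have "int a ^ i = (int a ^ (p - 1)) ^ (i div (p - 1)) * int a ^ (i mod (p - 1))" .
  moreover have "[(int a ^ (p - 1)) ^ (i div (p - 1)) * int a ^ (i mod (p - 1))
      = 1 ^ (i div (p - 1)) * int a ^ (i mod (p - 1))] (mod int (p * q))"
    using pw1 by (intro cong_mult cong_pow cong_refl)
  ultimately show ?thesis by simp
qed

lemma inS_cong: "[z = z'] (mod int (p * q)) \<Longrightarrow> inS z = inS z'"
  unfolding inS_def by (meson cong_sym cong_trans)

lemma inS_1: "inS 1" unfolding inS_def by (rule exI[of _ 0]) simp

lemma inS_m1: "inS (-1)" unfolding inS_def using half cong_sym by blast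

lemma inS_mult: "inS x \<Longrightarrow> inS y \<Longrightarrow> inS (x * y)"
  unfolding inS_def by (metis cong_mult power_add)

lemma inS_neg: "inS x \<Longrightarrow> inS (- x)"
  using inS_mult[OF inS_m1] by fastforce

lemma inS_sym: "inS (x - y) \<longleftrightarrow> inS (y - x)"
  using inS_neg by (metis minus_diff_eq)

lemma inS_inv: assumes "inS x" shows "\<exists>y. inS y \<and> [x * y = 1] (mod int (p * q))"
proof -
  obtain j where j: "[x = int a ^ j] (mod int (p * q))" using assms inS_def by auto
  define y where "y = int a ^ (j * (p - 2))"
  have "inS y" unfolding inS_def y_def using cong_refl by blast
  moreover have "[x * y = int a ^ j * y] (mod int (p * q))" using j by (intro cong_mult cong_refl)
  moreover have "int a ^ j * y = (int a ^ (p - 1)) ^ j"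
  proof -
    have e: "j + j * (p - 2) = (p - 1) * j" using p3
      by (cases p) (auto simp: algebra_simps)
    have "int a ^ j * y = int a ^ (j + j * (p - 2))" unfolding y_def by (simp add: power_add)
    also have "\<dots> = int a ^ ((p - 1) * j)" using e by simp
    also have "\<dots> = (int a ^ (p - 1)) ^ j" by (simp add: power_mult)
    finally show ?thesis .
  qed
  moreover have "[(int a ^ (p - 1)) ^ j = 1 ^ j] (mod int (p * q))" using pw1 cong_pow by blast
  ultimately show ?thesis by (metis cong_trans power_one)
qed

lemma inS_coprime: assumes "inS x" shows "coprime x (int (p * q))"
proof -
  obtain j where j: "[x = int a ^ j] (mod int (p * q))" using assms inS_def by auto
  have "coprime (int a) (int (p * q))" using cop by simp
  hence "coprime (int a ^ j) (int (p * q))" by simp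
  thus ?thesis using j cong_imp_coprime cong_sym by blast
qed

lemma inS_ndvd: assumes "inS x" shows "\<not> int p dvd x"
proof
  assume "int p dvd x"
  moreover have "int p dvd int (p * q)" by simp
  ultimately have "is_unit (int p)" by (rule coprime_common_divisor[OF inS_coprime[OF assms]])
  thus False using p3 by simp
qed

lemma inS_0: "\<not> inS 0" using inS_ndvd by auto

lemma ordp: "ord p a = p - 1"
  using prim pp by (simp add: residue_primroot_def totient_prime)

lemma copa: "coprime p a" using prim by (simp add: residue_primroot_def)

lemma inS_modp_inj:
  assumes "inS x" "inS y" "[x = y] (mod int p)"
  shows "[x = y] (mod int (p * q))"
proof -
  obtain i where i: "[x = int a ^ i] (mod int (p * q))" using assms inS_def by auto
  obtain j where j: "[y = int a ^ j] (mod int (p * q))" using assms inS_def by auto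
  have "[x = int a ^ i] (mod int p)" using i cong_modulus_mult by (metis of_nat_mult)
  moreover have "[y = int a ^ j] (mod int p)" using j cong_modulus_mult by (metis of_nat_mult)
  ultimately have "[int (a ^ i) = int (a ^ j)] (mod int p)" using assms(3)
    by (metis cong_sym cong_trans of_nat_power)
  hence "[a ^ i = a ^ j] (mod p)" using cong_int_iff by blast
  hence "[i = j] (mod (p - 1))" using order_divides_expdiff[OF copa] ordp by simp
  hence "i mod (p - 1) = j mod (p - 1)" by (simp add: cong_def)
  hence "[int a ^ i = int a ^ j] (mod int (p * q))" using red[of i] red[of j]
    by (metis cong_sym cong_trans)
  thus ?thesis using i j by (meson cong_sym cong_trans)
qed

lemma gen_exists:
  assumes "\<not> int p dvd z"
  shows "\<exists>s. inS s \<and> [s = z] (mod int p)"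
proof -
  let ?f = "\<lambda>j. a ^ j mod p"
  have inj: "inj_on ?f {..<p - 1}"
  proof
    fix i j assume "i \<in> {..<p - 1}" "j \<in> {..<p - 1}" "?f i = ?f j"
    hence "[i = j] (mod (p - 1))" using order_divides_expdiff[OF copa] ordp by (simp add: cong_def)
    thus "i = j" using \<open>i \<in> _\<close> \<open>j \<in> _\<close> by (simp add: cong_def)
  qed
  have sub: "?f ` {..<p - 1} \<subseteq> {1..<p}"
  proof
    fix r assume "r \<in> ?f ` {..<p - 1}"
    then obtain j where r: "r = a ^ j mod p" by auto
    have cj: "coprime p (a ^ j)" using copa by simp
    have "r \<noteq> 0"
    proof
      assume "r = 0"
      hence "p dvd a ^ j" using r by auto
      hence "is_unit p" by (rule coprime_common_divisor[OF cj dvd_refl])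
      thus False using p3 by simp
    qed
    moreover have "r < p" using r p3 by simp
    ultimately show "r \<in> {1..<p}" by simp
  qed
  have "card (?f ` {..<p - 1}) = card {1..<p}" using card_image[OF inj] by simp
  hence eq: "?f ` {..<p - 1} = {1..<p}" using sub by (intro card_subset_eq) auto
  define r where "r = nat (z mod int p)"
  have "int r = z mod int p" unfolding r_def using p3 by simp
  moreover have "z mod int p \<noteq> 0" using assms by auto
  moreover have "z mod int p < int p" using p3 by simp
  ultimately have "int r \<noteq> 0" "int r < int p" by simp_all
  hence "r \<noteq> 0" "r < p" by simp_all
  hence "r \<in> {1..<p}" by simp
  hence "r \<in> ?f ` {..<p - 1}" using eq by simp
  then obtain j where j: "r = a ^ j mod p" by blast
  have "int r = int a ^ j mod int p" unfolding j by (simp add: of_nat_mod)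
  hence "[int a ^ j = z] (mod int p)"
    unfolding cong_def using \<open>int r = z mod int p\<close> by simp
  moreover have "inS (int a ^ j)" unfolding inS_def using cong_refl by blast
  ultimately show ?thesis by blast
qed


lemma Npos: "int (p * q) > 0" using p3 q3 by simp

lemma int_lt_N [simp]: "int s < int p * int q \<longleftrightarrow> s < p * q"
  by (metis of_nat_less_iff of_nat_mult)

lemma nat_mod_N [simp]: "s < p * q \<Longrightarrow> nat (int s mod (int p * int q)) = s"
  by (metis int_lt_N nat_int mod_pos_pos_trivial of_nat_0_le_iff)

lemma memS_iff: "nat (z mod int (p * q)) \<in> S_pq p q a \<longleftrightarrow> inS z"
proof
  assume "nat (z mod int (p * q)) \<in> S_pq p q a"
  then obtain j where j: "nat (z mod int (p * q)) = a ^ j mod (p * q)" by (auto simp: S_pq_def)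
  have "z mod int (p * q) = int (nat (z mod int (p * q)))" using Npos by simp
  also have "\<dots> = int a ^ j mod int (p * q)" unfolding j by (simp add: of_nat_mod)
  finally have "[z = int a ^ j] (mod int (p * q))" unfolding cong_def by simp
  thus "inS z" unfolding inS_def by blast
next
  assume "inS z"
  then obtain j where j: "[z = int a ^ j] (mod int (p * q))" unfolding inS_def by blast
  define j' where "j' = j mod (p - 1)"
  have "j' < p - 1" unfolding j'_def using p3 by simp
  have "[z = int a ^ j'] (mod int (p * q))" unfolding j'_def using j red cong_trans by blast
  hence "z mod int (p * q) = int a ^ j' mod int (p * q)" unfolding cong_def .
  also have "\<dots> = int (a ^ j' mod (p * q))" by (simp add: of_nat_mod)
  finally have "nat (z mod int (p * q)) = a ^ j' mod (p * q)" by simp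
  thus "nat (z mod int (p * q)) \<in> S_pq p q a" unfolding S_pq_def using \<open>j' < p - 1\<close> by blast
qed

lemma S_iff: "s \<in> S_pq p q a \<longleftrightarrow> s < p * q \<and> inS (int s)"
proof
  assume s: "s \<in> S_pq p q a"
  hence "s < p * q" using p3 q3 by (auto simp: S_pq_def)
  moreover have "nat (int s mod int (p * q)) = s" using \<open>s < p * q\<close> by (simp flip: of_nat_mod)
  ultimately show "s < p * q \<and> inS (int s)" using s memS_iff[of "int s"] by simp
next
  assume "s < p * q \<and> inS (int s)"
  moreover have "nat (int s mod int (p * q)) = s" using calculation by (simp flip: of_nat_mod)
  ultimately show "s \<in> S_pq p q a" using memS_iff[of "int s"] by simp
qed

definition Lset where "Lset = {w \<in> {0..<p * q}. inS (int w) \<and> inS (int w - 1)}"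

lemma lam_eq: "S_pq p q a \<inter> shift1 (p * q) (S_pq p q a) = Lset"
proof (intro equalityI subsetI)
  fix w assume "w \<in> S_pq p q a \<inter> shift1 (p * q) (S_pq p q a)"
  then have w: "w < p * q" "inS (int w)" and "\<exists>s. s \<in> S_pq p q a \<and> w = (s + 1) mod (p * q)"
    using S_iff by (auto simp: shift1_def)
  then obtain s where s: "s \<in> S_pq p q a" "w = (s + 1) mod (p * q)" by blast
  have "int w = (int s + 1) mod int (p * q)" using s(2) by (simp add: of_nat_mod add.commute)
  hence "[int w = int s + 1] (mod int (p * q))" unfolding cong_def by simp
  hence "[int w - 1 = int s] (mod int (p * q))" using cong_diff[OF _ cong_refl[of 1]] by fastforce
  hence "inS (int w - 1)" using inS_cong S_iff s(1) by blast
  thus "w \<in> Lset" unfolding Lset_def using w by simp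
next
  fix w assume "w \<in> Lset"
  hence w: "w < p * q" "inS (int w)" "inS (int w - 1)" unfolding Lset_def by auto
  define s where "s = nat ((int w - 1) mod int (p * q))"
  have "s \<in> S_pq p q a" unfolding s_def using memS_iff w(3) by simp
  have isd: "int s = (int w - 1) mod int (p * q)" unfolding s_def using Npos by simp
  have "int ((s + 1) mod (p * q)) = (int s + 1) mod int (p * q)" by (simp add: of_nat_mod add.commute)
  also have "\<dots> = ((int w - 1) mod int (p * q) + 1) mod int (p * q)" using isd by simp
  also have "\<dots> = (int w - 1 + 1) mod int (p * q)" by (simp add: mod_add_left_eq)
  also have "\<dots> = int w" using w(1) by simp
  finally have "w = (s + 1) mod (p * q)" by linarith
  hence "w \<in> shift1 (p * q) (S_pq p q a)" unfolding shift1_def using \<open>s \<in> _\<close> by blast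
  moreover have "w \<in> S_pq p q a" using S_iff w by simp
  ultimately show "w \<in> S_pq p q a \<inter> shift1 (p * q) (S_pq p q a)" by simp
qed

definition gnb :: "nat \<Rightarrow> nat set" where
  "gnb x = {z \<in> {0..<p * q}. inS (int z - int x)}"

lemma modp_cong: "(x mod p = y mod p) \<longleftrightarrow> [int x = int y] (mod int p)"
  by (simp add: cong_def flip: of_nat_mod)

lemma gnb_modp: "z \<in> gnb x \<Longrightarrow> z mod p \<noteq> x mod p"
proof
  assume "z \<in> gnb x" "z mod p = x mod p"
  hence "[int z = int x] (mod int p)" using modp_cong by blast
  hence "int p dvd int z - int x" using cong_iff_dvd_diff by blast
  thus False using inS_ndvd \<open>z \<in> gnb x\<close> unfolding gnb_def by blast
qed

lemma cancel_right: "[u - x = v - x] (mod m) \<Longrightarrow> [u = v] (mod m)" for u v x m :: int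
  using cong_add[OF _ cong_refl[of x]] by fastforce

lemma gnb_uniq:
  assumes "z1 \<in> gnb x" "z2 \<in> gnb x" "z1 mod p = z2 mod p"
  shows "z1 = z2"
proof -
  have "[int z1 = int z2] (mod int p)" using assms(3) modp_cong by blast
  hence "[int z1 - int x = int z2 - int x] (mod int p)" by (intro cong_diff cong_refl)
  hence "[int z1 - int x = int z2 - int x] (mod int (p * q))"
    using inS_modp_inj assms(1,2) unfolding gnb_def by blast
  hence "[int z1 = int z2] (mod int (p * q))" by (rule cancel_right)
  hence "int z1 = int z2" using assms(1,2) unfolding gnb_def
    by (intro cong_less_imp_eq_int) auto
  thus ?thesis by simp
qed

lemma gnb_ex:
  assumes "x < p * q" "r mod p \<noteq> x mod p"
  shows "\<exists>z \<in> gnb x. z mod p = r mod p"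
proof -
  define d where "d = int r - int x"
  have "\<not> int p dvd d"
  proof
    assume "int p dvd d"
    hence "[int r = int x] (mod int p)" unfolding d_def using cong_iff_dvd_diff by blast
    thus False using assms(2) modp_cong by blast
  qed
  then obtain s where s: "inS s" "[s = d] (mod int p)" using gen_exists by blast
  define z where "z = nat ((int x + s) mod int (p * q))"
  have iz: "int z = (int x + s) mod int (p * q)" unfolding z_def using Npos by simp
  have zl: "z < p * q" using iz Npos
    by (metis of_nat_less_iff pos_mod_bound)
  have c1: "[int z = int x + s] (mod int (p * q))" unfolding cong_def iz by simp
  hence "[int z - int x = s] (mod int (p * q))" using cong_diff[OF c1 cong_refl[of "int x"]] by simp
  hence "inS (int z - int x)" using inS_cong s(1) by blast
  hence zg: "z \<in> gnb x" unfolding gnb_def using zl by simp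
  have "[int z = int x + s] (mod int p)" using c1 cong_dvd_modulus[of _ _ "int (p*q)" "int p"] by simp
  moreover have "[int x + s = int x + d] (mod int p)" using s(2) by (intro cong_add cong_refl)
  ultimately have "[int z = int r] (mod int p)" unfolding d_def using cong_trans by fastforce
  hence "z mod p = r mod p" using modp_cong by blast
  thus ?thesis using zg by blast
qed

lemma gnb_fin: "finite (gnb x)" unfolding gnb_def by simp

lemma gnb_card: assumes "x < p * q" shows "card (gnb x) = p - 1"
proof -
  have inj: "inj_on (\<lambda>z. z mod p) (gnb x)" using gnb_uniq by (meson inj_onI)
  have "(\<lambda>z. z mod p) ` gnb x = {0..<p} - {x mod p}"
  proof (intro equalityI subsetI)
    fix r assume "r \<in> (\<lambda>z. z mod p) ` gnb x"
    then obtain z where "z \<in> gnb x" "r = z mod p" by blast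
    thus "r \<in> {0..<p} - {x mod p}" using gnb_modp p3 by auto
  next
    fix r assume r: "r \<in> {0..<p} - {x mod p}"
    hence "r mod p \<noteq> x mod p" by simp
    then obtain z where "z \<in> gnb x" "z mod p = r mod p" using gnb_ex assms by blast
    thus "r \<in> (\<lambda>z. z mod p) ` gnb x" using r by force
  qed
  hence "card (gnb x) = card ({0..<p} - {x mod p})" using card_image[OF inj] by simp
  also have "\<dots> = p - 1" using p3 by simp
  finally show ?thesis .
qed

lemma gnb_coset1:
  assumes "x < p * q" "r < p" "r \<noteq> x mod p"
  shows "card {z \<in> gnb x. z mod p = r} = 1"
proof -
  obtain z where z: "z \<in> gnb x" "z mod p = r mod p" using gnb_ex assms by (metis mod_less)
  have "{z \<in> gnb x. z mod p = r} = {z}"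
    using z gnb_uniq assms(2) by auto
  thus ?thesis by simp
qed

lemma gnb_sym: "x < p * q \<Longrightarrow> y \<in> gnb x \<longleftrightarrow> y < p * q \<and> x \<in> gnb y"
  unfolding gnb_def using inS_sym by auto

lemma gnb_irr: "x \<notin> gnb x" unfolding gnb_def using inS_0 by simp

lemma gnb_common:
  assumes "x < p * q" "y < p * q" "inS (int x - int y)"
  shows "card (gnb x \<inter> gnb y) = card Lset"
proof -
  define N where "N = int (p * q)"
  have N0: "N > 0" unfolding N_def using Npos .
  define d where "d = int x - int y"
  obtain d' where d': "inS d'" "[d * d' = 1] (mod N)" using inS_inv assms(3) unfolding d_def N_def by blast
  have cd: "coprime d N" using inS_coprime assms(3) unfolding d_def N_def by blast
  have cd': "coprime d' N" using inS_coprime d'(1) unfolding N_def by blast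
  define f where "f w = nat ((int x - d * int w) mod N)" for w
  define g where "g z = nat ((d' * (int x - int z)) mod N)" for z
  have fi: "int (f w) = (int x - d * int w) mod N" for w unfolding f_def using N0 by simp
  have gi: "int (g z) = (d' * (int x - int z)) mod N" for z unfolding g_def using N0 by simp
  have "card Lset \<le> card (gnb x \<inter> gnb y)"
  proof (rule card_inj_on_le)
    show "inj_on f Lset"
    proof
      fix w1 w2 assume w: "w1 \<in> Lset" "w2 \<in> Lset" "f w1 = f w2"
      hence "[int x - d * int w1 = int x - d * int w2] (mod N)" unfolding cong_def using fi
        by (metis of_nat_eq_iff)
      hence "[- (d * int w1) = - (d * int w2)] (mod N)" using cong_diff[OF _ cong_refl[of "int x"]] by fastforce
      hence "[d * int w1 = d * int w2] (mod N)" using cong_minus_minus_iff by blast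
      hence "[int w1 = int w2] (mod N)" using cong_mult_lcancel[OF cd] by blast
      thus "w1 = w2" using w(1,2) unfolding Lset_def N_def
        using cong_less_imp_eq_int[of "int w1" "int (p*q)" "int w2"] by auto
    qed
    show "f ` Lset \<subseteq> gnb x \<inter> gnb y"
    proof
      fix z assume "z \<in> f ` Lset"
      then obtain w where w: "w \<in> Lset" "z = f w" by blast
      have wi: "inS (int w)" "inS (int w - 1)" using w(1) unfolding Lset_def by auto
      have zl: "z < p * q" using fi[of w] N0 unfolding w(2) N_def
        by (metis of_nat_less_iff pos_mod_bound)
      have cz: "[int z = int x - d * int w] (mod N)" unfolding w(2) cong_def fi by simp
      have "[int z - int x = - (d * int w)] (mod N)" using cong_diff[OF cz cong_refl[of "int x"]] by simp
      moreover have "inS (- (d * int w))" using inS_neg inS_mult assms(3) wi(1) unfolding d_def by blast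
      ultimately have z1: "inS (int z - int x)" using inS_cong N_def by blast
      have c2: "[int z - int y = int x - d * int w - int y] (mod N)" using cong_diff[OF cz cong_refl[of "int y"]] .
      have e2: "int x - d * int w - int y = - (d * (int w - 1))" unfolding d_def by (simp add: algebra_simps)
      have i2: "inS (- (d * (int w - 1)))" using inS_neg inS_mult assms(3) wi(2) unfolding d_def by blast
      have "[int z - int y = - (d * (int w - 1))] (mod int (p * q))" using c2 e2 unfolding N_def by simp
      hence z2: "inS (int z - int y)" using inS_cong i2 by blast
      show "z \<in> gnb x \<inter> gnb y" unfolding gnb_def using z1 z2 zl by simp
    qed
  qed (simp add: gnb_fin)
  moreover have "card (gnb x \<inter> gnb y) \<le> card Lset"
  proof (rule card_inj_on_le)
    show "inj_on g (gnb x \<inter> gnb y)"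
    proof
      fix z1 z2 assume z: "z1 \<in> gnb x \<inter> gnb y" "z2 \<in> gnb x \<inter> gnb y" "g z1 = g z2"
      hence "[d' * (int x - int z1) = d' * (int x - int z2)] (mod N)" unfolding cong_def using gi
        by (metis of_nat_eq_iff)
      hence "[int x - int z1 = int x - int z2] (mod N)" using cong_mult_lcancel[OF cd'] by blast
      hence "[- int z1 = - int z2] (mod N)" using cong_diff[OF _ cong_refl[of "int x"]] by fastforce
      hence "[int z1 = int z2] (mod N)" using cong_minus_minus_iff by blast
      thus "z1 = z2" using z(1,2) unfolding gnb_def N_def
        using cong_less_imp_eq_int[of "int z1" "int (p*q)" "int z2"] by auto
    qed
    show "g ` (gnb x \<inter> gnb y) \<subseteq> Lset"
    proof
      fix w assume "w \<in> g ` (gnb x \<inter> gnb y)"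
      then obtain z where z: "z \<in> gnb x \<inter> gnb y" "w = g z" by blast
      have zi: "inS (int z - int x)" "inS (int z - int y)" using z(1) unfolding gnb_def by auto
      have wl: "w < p * q" using gi[of z] N0 unfolding z(2) N_def
        by (metis of_nat_less_iff pos_mod_bound)
      have cw: "[int w = d' * (int x - int z)] (mod N)" unfolding z(2) cong_def gi by simp
      have "inS (d' * (int x - int z))" using inS_mult d'(1) zi(1) inS_sym by blast
      hence w1: "inS (int w)" using cw inS_cong N_def by blast
      have c2: "[int w - 1 = d' * (int x - int z) - d * d'] (mod N)"
        using cong_diff[OF cw cong_sym[OF d'(2)]] .
      have e2: "d' * (int x - int z) - d * d' = d' * (int y - int z)" unfolding d_def
        by (simp add: algebra_simps)
      have i2: "inS (d' * (int y - int z))" using inS_mult d'(1) zi(2) inS_sym by blast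
      have "[int w - 1 = d' * (int y - int z)] (mod int (p * q))" using c2 e2 unfolding N_def by simp
      hence w2: "inS (int w - 1)" using inS_cong i2 by blast
      show "w \<in> Lset" unfolding Lset_def using wl w1 w2 by simp
    qed
  qed (simp add: Lset_def)
  ultimately show ?thesis by simp
qed

lemma coset_card: assumes "r < p" shows "card {x \<in> {0..<p * q}. x mod p = r} = q"
proof -
  have "{x \<in> {0..<p * q}. x mod p = r} = (\<lambda>k. r + p * k) ` {0..<q}"
  proof (intro equalityI subsetI)
    fix x assume x: "x \<in> {x \<in> {0..<p * q}. x mod p = r}"
    hence xr: "x mod p = r" "x < p * q" by auto
    hence "x = r + p * (x div p)" using mod_mult_div_eq[of x p] by simp
    moreover have "x < q * p" using xr(2) by (simp only: mult.commute)
    hence "x div p < q" by (rule less_mult_imp_div_less)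
    ultimately show "x \<in> (\<lambda>k. r + p * k) ` {0..<q}" by force
  next
    fix x assume "x \<in> (\<lambda>k. r + p * k) ` {0..<q}"
    then obtain k where k: "k < q" "x = r + p * k" by auto
    have "r + p * k < p + p * k" using assms by simp
    also have "\<dots> = p * (k + 1)" by simp
    also have "\<dots> \<le> p * q" using k(1) by (intro mult_le_mono2) simp
    finally have "x < p * q" using k by simp
    moreover have "x mod p = r" using k assms by simp
    ultimately show "x \<in> {x \<in> {0..<p * q}. x mod p = r}" by simp
  qed
  moreover have "inj_on (\<lambda>k. r + p * k) {0..<q}" using p3 by (intro inj_onI) simp
  ultimately show ?thesis by (simp add: card_image)
qed


lemma two_gnb:
  assumes "z \<in> gnb x" "z \<in> gnb y" "x < p * q" "y < p * q" "x mod p = y mod p"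
  shows "x = y"
proof -
  have "[int x = int y] (mod int p)" using assms(5) modp_cong by blast
  hence "[int z - int x = int z - int y] (mod int p)" by (intro cong_diff cong_refl)
  hence "[int z - int x = int z - int y] (mod int (p * q))"
    using inS_modp_inj assms(1,2) unfolding gnb_def by blast
  hence "[int z - (int z - int x) = int z - (int z - int y)] (mod int (p * q))"
    using cong_diff[OF cong_refl[of "int z"]] by blast
  hence "[int x = int y] (mod int (p * q))" by simp
  hence "int x = int y" using assms(3,4) by (intro cong_less_imp_eq_int) auto
  thus ?thesis by simp
qed

end



locale fg = nm +
  fixes t :: nat and c :: "nat \<Rightarrow> nat" and \<pi> :: "nat \<Rightarrow> nat \<Rightarrow> nat"
  assumes tq: "t * q = card Lset + 2"
    and cb: "bij_betw c {0..<p} {1..p}"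
    and perm: "\<forall>i\<in>{2..t}. \<pi> i permutes {1..p}"
begin

abbreviation V where "V \<equiv> F_vertices t p q"
abbreviation E where "E \<equiv> F_adj p q a c \<pi>"

definition P where "P i = F_perm \<pi> i"
definition cls where "cls u = inv_into UNIV (P (fst u)) (c (snd u mod p))"
definition rr where "rr i m = inv_into {0..<p} c (P i m)"
definition K where "K m = {u \<in> V. cls u = m}"
definition A where "A u = {fst u} \<times> gnb (snd u)"

lemma t1: "t \<ge> 1" using tq by (cases t) auto

lemma V_iff: "(i, x) \<in> V \<longleftrightarrow> i \<in> {1..t} \<and> x < p * q" by (simp add: F_vertices_def)

lemma finV: "finite V" by (simp add: F_vertices_def)

lemma Pperm: "i \<in> {1..t} \<Longrightarrow> P i permutes {1..p}"
  unfolding P_def F_perm_def using perm by (cases "i = 1") (auto simp: permutes_id)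

lemma E_iff: "E u w \<longleftrightarrow> u \<noteq> w \<and> ((fst u = fst w \<and> inS (int (snd u) - int (snd w))) \<or> cls u = cls w)"
  unfolding F_adj_def Gamma_adj_def memS_iff cls_def P_def by (rule refl)

lemma cls_iff:
  assumes "i \<in> {1..t}" "m \<in> {1..p}"
  shows "cls (i, x) = m \<longleftrightarrow> x mod p = rr i m"
proof -
  have b: "bij (P i)" using Pperm[OF assms(1)] permutes_bij by blast
  have "cls (i, x) = m \<longleftrightarrow> P i m = c (x mod p)" unfolding cls_def
    using bij_inv_eq_iff[OF b, of m "c (x mod p)"] by auto
  moreover have "P i m = c (x mod p) \<longleftrightarrow> x mod p = rr i m"
  proof
    have Pm: "P i m \<in> {1..p}" using permutes_in_image[OF Pperm[OF assms(1)]] assms(2) by simp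
    have xm: "x mod p \<in> {0..<p}" using p3 by simp
    have inj: "inj_on c {0..<p}" using cb by (rule bij_betw_imp_inj_on)
    have surj: "c ` {0..<p} = {1..p}" using cb by (rule bij_betw_imp_surj_on)
    {
      assume h: "P i m = c (x mod p)"
      show "x mod p = rr i m" unfolding rr_def h using inv_into_f_f[OF inj xm] by simp
    next
      assume h: "x mod p = rr i m"
      have "c (inv_into {0..<p} c (P i m)) = P i m" using f_inv_into_f[of "P i m" c "{0..<p}"] Pm surj by simp
      thus "P i m = c (x mod p)" using h unfolding rr_def by simp
    }
  qed
  ultimately show ?thesis by simp
qed

lemma rr_lt: "i \<in> {1..t} \<Longrightarrow> m \<in> {1..p} \<Longrightarrow> rr i m < p"
proof -
  assume "i \<in> {1..t}" "m \<in> {1..p}"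
  hence "P i m \<in> {1..p}" using permutes_in_image[OF Pperm] by blast
  hence "P i m \<in> c ` {0..<p}" using bij_betw_imp_surj_on[OF cb] by simp
  hence "inv_into {0..<p} c (P i m) \<in> {0..<p}" by (rule inv_into_into)
  thus "rr i m < p" unfolding rr_def by simp
qed

lemma cls_in: "i \<in> {1..t} \<Longrightarrow> cls (i, x) \<in> {1..p}"
proof -
  assume i: "i \<in> {1..t}"
  have pi: "inv_into UNIV (P i) permutes {1..p}" using Pperm[OF i] by (rule permutes_inv)
  have "x mod p \<in> {0..<p}" using p3 by simp
  hence "c (x mod p) \<in> {1..p}" using bij_betw_apply[OF cb] by blast
  thus ?thesis unfolding cls_def using permutes_in_image[OF pi] by simp
qed

lemma cls_copy: "i \<in> {1..t} \<Longrightarrow> cls (i, x) = cls (i, y) \<longleftrightarrow> x mod p = y mod p"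
  using cls_iff[of i "cls (i, y)" x] cls_iff[of i "cls (i, y)" y] cls_in[of i y] by simp

lemma K_card: assumes "m \<in> {1..p}" shows "card (K m) = t * q"
proof -
  have "K m = Sigma {1..t} (\<lambda>i. {x \<in> {0..<p * q}. x mod p = rr i m})"
  proof (intro equalityI subsetI)
    fix u assume "u \<in> K m"
    then obtain i x where u: "u = (i, x)" "i \<in> {1..t}" "x < p * q" "cls (i, x) = m"
      unfolding K_def F_vertices_def by auto
    thus "u \<in> Sigma {1..t} (\<lambda>i. {x \<in> {0..<p * q}. x mod p = rr i m})"
      using cls_iff[OF u(2) assms] by simp
  next
    fix u assume "u \<in> Sigma {1..t} (\<lambda>i. {x \<in> {0..<p * q}. x mod p = rr i m})"
    then obtain i x where u: "u = (i, x)" "i \<in> {1..t}" "x < p * q" "x mod p = rr i m" by auto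
    thus "u \<in> K m" unfolding K_def F_vertices_def using cls_iff[OF u(2) assms] by simp
  qed
  hence "card (K m) = (\<Sum>i\<in>{1..t}. card {x \<in> {0..<p * q}. x mod p = rr i m})"
    by (simp add: card_SigmaI)
  also have "\<dots> = (\<Sum>i\<in>{1..t}. q)" using coset_card rr_lt assms by (intro sum.cong) auto
  finally show ?thesis by simp
qed

lemma K_sub: "K m \<subseteq> V" unfolding K_def by auto
lemma finK: "finite (K m)" using finite_subset[OF K_sub finV] .

lemma u_in_K: "u \<in> V \<Longrightarrow> u \<in> K (cls u)" unfolding K_def by simp

lemma cls_uV: "u \<in> V \<Longrightarrow> cls u \<in> {1..p}" using cls_in by (cases u) (simp add: V_iff)

lemma nbrs_eq: assumes "u \<in> V" shows "nbrs V E u = A u \<union> (K (cls u) - {u})"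
proof -
  obtain i x where u: "u = (i, x)" "i \<in> {1..t}" "x < p * q" using assms by (cases u) (auto simp: V_iff)
  show ?thesis
  proof (intro equalityI subsetI)
    fix w assume "w \<in> nbrs V E u"
    hence w: "w \<in> V" "E u w" unfolding nbrs_def by auto
    obtain j z where wz: "w = (j, z)" by (cases w)
    have "z < p * q" using w(1) wz by (simp add: V_iff)
    show "w \<in> A u \<union> (K (cls u) - {u})"
    proof (cases "cls u = cls w")
      case True thus ?thesis using w unfolding K_def E_iff by auto
    next
      case False
      hence "j = i" "inS (int x - int z)" using w(2) unfolding E_iff wz u by auto
      hence "z \<in> gnb x" using \<open>z < p * q\<close> inS_sym unfolding gnb_def by auto
      thus ?thesis unfolding A_def wz u \<open>j = i\<close> by simp
    qed
  next
    fix w assume w: "w \<in> A u \<union> (K (cls u) - {u})"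
    show "w \<in> nbrs V E u"
    proof (cases "w \<in> A u")
      case True
      then obtain z where z: "w = (i, z)" "z \<in> gnb x" unfolding A_def u by auto
      have "z \<noteq> x" using z(2) gnb_irr by blast
      moreover have "inS (int x - int z)" using z(2) inS_sym unfolding gnb_def by auto
      moreover have "z < p * q" using z(2) unfolding gnb_def by auto
      ultimately show ?thesis unfolding nbrs_def E_iff using z u by (simp add: V_iff)
    next
      case False
      hence "w \<in> K (cls u)" "w \<noteq> u" using w by auto
      thus ?thesis unfolding nbrs_def K_def E_iff by auto
    qed
  qed
qed

lemma AK_disj: assumes "u \<in> V" shows "A u \<inter> K (cls u) = {}"
proof -
  obtain i x where u: "u = (i, x)" "i \<in> {1..t}" "x < p * q" using assms by (cases u) (auto simp: V_iff)
  show ?thesis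
  proof (rule ccontr)
    assume "A u \<inter> K (cls u) \<noteq> {}"
    then obtain z where "z \<in> gnb x" "cls (i, z) = cls (i, x)" unfolding A_def K_def u by auto
    thus False using cls_copy[OF u(2)] gnb_modp by blast
  qed
qed

lemma A_card: "card (A u) = card (gnb (snd u))"
  unfolding A_def by (simp add: card_cartesian_product_singleton)

lemma finA: "finite (A u)" unfolding A_def using gnb_fin by simp

lemma deg: assumes "u \<in> V" shows "card (nbrs V E u) = p + card Lset"
proof -
  have "card (nbrs V E u) = card (A u) + card (K (cls u) - {u})"
    unfolding nbrs_eq[OF assms] using AK_disj[OF assms] finA[of u] finK[of "cls u"]
    by (intro card_Un_disjoint) auto
  also have "card (A u) = p - 1" unfolding A_card using gnb_card assms
    by (cases u) (simp add: V_iff)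
  also have "card (K (cls u) - {u}) = t * q - 1"
    using K_card[OF cls_uV[OF assms]] u_in_K[OF assms] finK by simp
  finally show ?thesis using tq p3 by simp
qed

lemma E_sym: "E u w \<longleftrightarrow> E w u"
  using inS_sym[of "int (snd u)" "int (snd w)"] unfolding E_iff by auto

lemma edge_common:
  assumes "u \<in> V" "w \<in> V" "E u w"
  shows "card (nbrs V E u \<inter> nbrs V E w) = card Lset"
proof -
  obtain i x where u: "u = (i, x)" "i \<in> {1..t}" "x < p * q" using assms by (cases u) (auto simp: V_iff)
  obtain j y where w: "w = (j, y)" "j \<in> {1..t}" "y < p * q" using assms by (cases w) (auto simp: V_iff)
  have uw: "u \<noteq> w" using assms(3) unfolding E_iff by simp
  show ?thesis
  proof (cases "cls u = cls w")
    case True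
    define m where "m = cls u"
    have eq: "nbrs V E u \<inter> nbrs V E w = K m - {u, w}"
    proof (intro equalityI subsetI)
      fix v assume v: "v \<in> nbrs V E u \<inter> nbrs V E w"
      have "v \<notin> A u"
      proof
        assume vA: "v \<in> A u"
        hence "v \<notin> K m" using AK_disj[OF assms(1)] m_def by blast
        hence "v \<in> A w" using v True m_def unfolding nbrs_eq[OF assms(1)] nbrs_eq[OF assms(2)] by auto
        then obtain z where "v = (j, z)" "z \<in> gnb y" unfolding A_def w by auto
        moreover have "v = (i, z)" "z \<in> gnb x" using vA \<open>v = (j, z)\<close> unfolding A_def u by auto
        ultimately have "i = j" "z \<in> gnb x" "z \<in> gnb y" by auto
        moreover have "x mod p = y mod p" using True cls_copy[OF u(2)] u w \<open>i = j\<close> by simp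
        ultimately have "x = y" using two_gnb u w by blast
        thus False using uw u w \<open>i = j\<close> by simp
      qed
      moreover have "v \<notin> A w"
      proof
        assume vA: "v \<in> A w"
        have "A w \<inter> K m = {}" using AK_disj[OF assms(2)] True m_def by simp
        hence "v \<notin> K m" using vA by blast
        hence "v \<in> A u" using v True m_def unfolding nbrs_eq[OF assms(1)] nbrs_eq[OF assms(2)] by auto
        thus False using \<open>v \<notin> A u\<close> by simp
      qed
      ultimately show "v \<in> K m - {u, w}" using v True m_def
        unfolding nbrs_eq[OF assms(1)] nbrs_eq[OF assms(2)] by auto
    next
      fix v assume "v \<in> K m - {u, w}"
      thus "v \<in> nbrs V E u \<inter> nbrs V E w" using True m_def
        unfolding nbrs_eq[OF assms(1)] nbrs_eq[OF assms(2)] by auto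
    qed
    have "card (K m - {u, w}) = card (K m) - card {u, w}"
      using u_in_K[OF assms(1)] u_in_K[OF assms(2)] True m_def finK
      by (intro card_Diff_subset) auto
    also have "\<dots> = t * q - 2" using K_card[OF cls_uV[OF assms(1)]] m_def uw by simp
    finally show ?thesis using eq tq by simp
  next
    case False
    hence ij: "i = j" and ixy: "inS (int x - int y)" using assms(3) unfolding E_iff u w by auto
    have eq: "nbrs V E u \<inter> nbrs V E w = {i} \<times> (gnb x \<inter> gnb y)"
    proof (intro equalityI subsetI)
      fix v assume v: "v \<in> nbrs V E u \<inter> nbrs V E w"
      have yx: "y \<in> gnb x" using ixy inS_sym w(3) unfolding gnb_def by auto
      have xy: "x \<in> gnb y" using ixy u(3) unfolding gnb_def by auto
      have c1: "v \<notin> A u \<inter> (K (cls w) - {w})"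
      proof
        assume "v \<in> A u \<inter> (K (cls w) - {w})"
        then obtain z where z: "v = (i, z)" "z \<in> gnb x" "cls (i, z) = cls (i, y)" "v \<noteq> w"
          unfolding A_def K_def u w ij by auto
        hence "z mod p = y mod p" using cls_copy u(2) by blast
        hence "z = y" using gnb_uniq z(2) yx by blast
        thus False using z w ij by simp
      qed
      have c2: "v \<notin> A w \<inter> (K (cls u) - {u})"
      proof
        assume "v \<in> A w \<inter> (K (cls u) - {u})"
        then obtain z where z: "v = (i, z)" "z \<in> gnb y" "cls (i, z) = cls (i, x)" "v \<noteq> u"
          unfolding A_def K_def u w ij by auto
        hence "z mod p = x mod p" using cls_copy u(2) by blast
        hence "z = x" using gnb_uniq z(2) xy by blast
        thus False using z u by simp
      qed
      have c3: "v \<notin> K (cls u) \<inter> K (cls w)" using False unfolding K_def by auto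
      have "v \<in> A u \<inter> A w" using v c1 c2 c3
        unfolding nbrs_eq[OF assms(1)] nbrs_eq[OF assms(2)] by blast
      thus "v \<in> {i} \<times> (gnb x \<inter> gnb y)" unfolding A_def u w ij by auto
    next
      fix v assume "v \<in> {i} \<times> (gnb x \<inter> gnb y)"
      hence "v \<in> A u" "v \<in> A w" unfolding A_def u w ij by auto
      thus "v \<in> nbrs V E u \<inter> nbrs V E w"
        unfolding nbrs_eq[OF assms(1)] nbrs_eq[OF assms(2)] by blast
    qed
    show ?thesis unfolding eq card_cartesian_product_singleton
      using gnb_common[OF u(3) w(3) ixy] .
  qed
qed

lemma clique_part:
  "\<exists>C. is_clique V E C \<and> card C = card Lset + 2 \<and> (\<forall>x\<in>V - C. card (nbrs V E x \<inter> C) = 1)"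
proof -
  have v10: "(1, 0) \<in> V" using t1 p3 q3 by (simp add: V_iff)
  define m0 where "m0 = cls (1, 0)"
  have m0: "m0 \<in> {1..p}" using cls_uV[OF v10] m0_def by simp
  have "is_clique V E (K m0)" unfolding is_clique_def using K_sub
    by (auto simp: K_def E_iff)
  moreover have "card (K m0) = card Lset + 2" using K_card[OF m0] tq by simp
  moreover have "\<forall>v\<in>V - K m0. card (nbrs V E v \<inter> K m0) = 1"
  proof
    fix v assume v: "v \<in> V - K m0"
    obtain j y where vy: "v = (j, y)" "j \<in> {1..t}" "y < p * q" using v by (cases v) (auto simp: V_iff)
    have cv: "cls v \<noteq> m0" using v unfolding K_def by auto
    have eq: "nbrs V E v \<inter> K m0 = {j} \<times> {z \<in> gnb y. z mod p = rr j m0}"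
    proof (intro equalityI subsetI)
      fix w assume w: "w \<in> nbrs V E v \<inter> K m0"
      hence "w \<notin> K (cls v)" using cv unfolding K_def by auto
      hence "w \<in> A v" using w unfolding nbrs_eq[OF DiffD1[OF v]] by auto
      then obtain z where z: "w = (j, z)" "z \<in> gnb y" unfolding A_def vy by auto
      have "cls (j, z) = m0" using w z unfolding K_def by auto
      hence "z mod p = rr j m0" using cls_iff[OF vy(2) m0] by simp
      thus "w \<in> {j} \<times> {z \<in> gnb y. z mod p = rr j m0}" using z by simp
    next
      fix w assume "w \<in> {j} \<times> {z \<in> gnb y. z mod p = rr j m0}"
      then obtain z where z: "w = (j, z)" "z \<in> gnb y" "z mod p = rr j m0" by auto
      have "w \<in> A v" using z unfolding A_def vy by simp
      moreover have "cls w = m0" using z cls_iff[OF vy(2) m0] by simp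
      moreover have "w \<in> V" using z vy unfolding gnb_def by (simp add: V_iff)
      ultimately show "w \<in> nbrs V E v \<inter> K m0"
        unfolding nbrs_eq[OF DiffD1[OF v]] K_def by auto
    qed
    have "rr j m0 \<noteq> y mod p" using cv cls_iff[OF vy(2) m0, of y] vy by auto
    hence "card {z \<in> gnb y. z mod p = rr j m0} = 1"
      using gnb_coset1[OF vy(3) rr_lt[OF vy(2) m0]] by simp
    thus "card (nbrs V E v \<inter> K m0) = 1" unfolding eq card_cartesian_product_singleton .
  qed
  ultimately show ?thesis by blast
qed

lemma not_complete: "\<not> complete_graph V E"
proof
  assume comp: "complete_graph V E"
  have "p * 3 \<le> p * q" using q3 by simp
  hence pq1: "1 + p < p * q" using p3 by linarith
  have v: "(1, 0) \<in> V" "(1, 1) \<in> V" "(1, 1 + p) \<in> V" using t1 p3 q3 pq1 by (auto simp: V_iff)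
  have e1: "E (1, 0) (1, 1)" and e2: "E (1, 0) (1, 1 + p)" using comp v unfolding complete_graph_def by auto
  have "cls (1, 0) \<noteq> cls (1, 1)" "cls (1, 0) \<noteq> cls (1, 1 + p)"
  proof -
    have m0: "1 mod p = 1" "0 mod p = 0" using p3 by simp_all
    have "(1 + p) mod p = 1 mod p" by (rule mod_add_self2)
    hence m1: "(1 + p) mod p = 1" "1 mod p = 1" "0 mod p = 0" using m0 by simp_all
    have "(1::nat) \<in> {1..t}" using t1 by simp
    thus "cls (1, 0) \<noteq> cls (1, 1)" "cls (1, 0) \<noteq> cls (1, 1 + p)"
      using cls_copy[of 1] m1 by auto
  qed
  hence "inS (int 0 - int 1)" "inS (int 0 - int (1 + p))" using e1 e2 unfolding E_iff by auto
  hence "inS (int 1 - int 0)" "inS (int (1 + p) - int 0)"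
    using inS_sym[of "int 0" "int 1"] inS_sym[of "int 0" "int (1 + p)"] by blast+
  hence "1 \<in> gnb 0" "1 + p \<in> gnb 0" using pq1 p3 q3 unfolding gnb_def by auto
  moreover have "1 mod p = (1 + p) mod p" by (rule mod_add_self2[symmetric])
  ultimately have "1 = 1 + p" using gnb_uniq by blast
  thus False using p3 by simp
qed

lemma result:
  "neumaier_graph V E (t * p * q) (p + card Lset) (card Lset) 1 (card Lset + 2)"
proof -
  have sg: "simple_graph V E" unfolding simple_graph_def using finV E_sym by (auto simp: E_iff)
  have cV: "card V = t * p * q" by (simp add: F_vertices_def)
  have reg: "regular_graph V E (p + card Lset)" unfolding regular_graph_def using deg by blast
  have ex: "\<exists>x\<in>V. \<exists>y\<in>V. E x y"
  proof -
    have "(1, 0) \<in> V" "(1, p) \<in> V" using t1 p3 q3 by (auto simp: V_iff)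
    moreover have "E (1, 0) (1, p)" unfolding E_iff using cls_copy[of 1 0 p] t1 p3 by auto
    ultimately show ?thesis by blast
  qed
  have er: "edge_regular V E (card Lset)" unfolding edge_regular_def using reg ex edge_common by blast
  show ?thesis unfolding neumaier_graph_def using sg cV not_complete reg er clique_part by auto
qed

end

theorem mainTheorem6:
  fixes p q a t :: nat and c :: "nat \<Rightarrow> nat" and \<pi> :: "nat \<Rightarrow> nat \<Rightarrow> nat"
  assumes "prime p" and "prime q" and "odd p" and "odd q" and "p \<noteq> q"
    and "a < p * q" and "coprime a (p * q)"
    and "residue_primroot p a"
    and "[int a ^ ((p - 1) div 2) = - 1] (mod int (p * q))"
    and "[int (card (S_pq p q a \<inter> shift1 (p * q) (S_pq p q a))) = - 2] (mod int q)"
    and "t = (card (S_pq p q a \<inter> shift1 (p * q) (S_pq p q a)) + 2) div q"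
    and "bij_betw c {0..<p} {1..p}"
    and "\<forall>i\<in>{2..t}. \<pi> i permutes {1..p}"
  shows "neumaier_graph (F_vertices t p q) (F_adj p q a c \<pi>)
           (t * p * q)
           (p + card (S_pq p q a \<inter> shift1 (p * q) (S_pq p q a)))
           (card (S_pq p q a \<inter> shift1 (p * q) (S_pq p q a)))
           1
           (card (S_pq p q a \<inter> shift1 (p * q) (S_pq p q a)) + 2)"
proof -
  interpret N: nm p q a unfolding nm_def using assms by blast
  define L where "L = card (S_pq p q a \<inter> shift1 (p * q) (S_pq p q a))"
  have L: "L = card N.Lset" unfolding L_def using N.lam_eq by simp
  have "[int L = - 2] (mod int q)" using assms(10) unfolding L_def .
  hence "int q dvd int L - (- 2)" using cong_iff_dvd_diff by blast
  hence "int q dvd int (L + 2)" by (simp add: add.commute)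
  hence "q dvd L + 2" by (simp only: of_nat_dvd_iff)
  hence tq: "t * q = L + 2" using assms(11) unfolding L_def[symmetric] by simp
  have "fg p q a t c \<pi>" unfolding fg_def fg_axioms_def
    using N.nm_axioms tq L assms(12,13) by simp
  then interpret F: fg p q a t c \<pi> .
  show ?thesis using F.result L unfolding L_def by simp
qed

end
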